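(* In the Gaussian setting, for every $w\in S$ we have $\langle\nabla_{w_1}L(w),w_1\rangle<0$.
   Context: Gaussian setting: $y$ uniform on $\{\pm1\}$; $x=(x_1,x_2)$ with $x_1\in\mathbb{R}$, $x_1\mid y\sim\mathcal{N}(y\gamma,\sigma_1^2)$ for some $\gamma>0$, and $x_2\sim\mathcal{N}(0,\Sigma_2)$, $\Sigma_2\succ0$, independent of $(x_1,y)$. $w=(w_1,w_2)$ with $w_1\in\mathbb{R}$. $\ell_{exp}(t)=\exp(-|t|)$, $L(w)=\mathbb{E}[\ell_{exp}(w^\top x)]$. $\tilde\Sigma=\mathrm{diag}(\sigma_1^2,\Sigma_2)$ with extreme eigenvalues $\tilde\sigma_{min},\tilde\sigma_{max}$. The function $r(\sigma)=\sigma^2+\sigma\sqrt{2\log\frac{4\sqrt2}{\sqrt\pi\sigma}}$ for $0<\sigma\le\frac{4\sqrt2}{\sqrt\pi}$ and $r(\sigma)=2\sigma^2$ otherwise. Fix $R>0$, let $a=r(R\tilde\sigma_{max})$ (equivalently $a=\sqrt2R\tilde\sigma_{min}\mathrm{erfc}^{-1}(2\rho)$ for $\rho=\frac12\mathrm{erfc}(\frac{r(R\tilde\sigma_{max})}{\sqrt2R\tilde\sigma_{min}})$), and $S=\{w:\ w_1\gamma\ge a,\ \|w\|_2\le R\}$. *)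

theory Defs
  imports "HOL-Probability.Probability"
begin

definition pos_def_mat :: "real^'n^'n \<Rightarrow> bool" where
  "pos_def_mat A \<longleftrightarrow> transpose A = A \<and> (\<forall>v. v \<noteq> 0 \<longrightarrow> v \<bullet> (A *v v) > 0)"

definition mat_eigenvalues :: "real^'n^'n \<Rightarrow> real set" where
  "mat_eigenvalues A = {l. \<exists>v. v \<noteq> 0 \<and> A *v v = l *\<^sub>R v}"

definition Sigma_tilde :: "real \<Rightarrow> real^'n^'n \<Rightarrow> real^('n + unit)^('n + unit)" where
  "Sigma_tilde s1 S2 = (\<chi> i j. case (i, j) of
       (Inr _, Inr _) \<Rightarrow> s1\<^sup>2
     | (Inl a, Inl b) \<Rightarrow> S2 $ a $ b
     | _ \<Rightarrow> 0)"

definition sigma_tilde_max :: "real \<Rightarrow> real^'n^'n \<Rightarrow> real" where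
  "sigma_tilde_max s1 S2 = Max (mat_eigenvalues (Sigma_tilde s1 S2))"

definition sigma_tilde_min :: "real \<Rightarrow> real^'n^'n \<Rightarrow> real" where
  "sigma_tilde_min s1 S2 = Min (mat_eigenvalues (Sigma_tilde s1 S2))"

definition mv_gauss_density :: "real^'n^'n \<Rightarrow> real^'n \<Rightarrow> real" where
  "mv_gauss_density S x =
     exp (- (x \<bullet> (matrix_inv S *v x)) / 2) / sqrt ((2 * pi) ^ CARD('n) * det S)"

definition ell_exp :: "real \<Rightarrow> real" where
  "ell_exp t = exp (- \<bar>t\<bar>)"

text \<open>L(w) = E[ell_exp(w^T x)], y uniform on {-1,1}, x1 | y ~ N(y gamma, s1^2),
  x2 ~ N(0, Sigma2) independent of (x1, y).\<close>
definition gauss_loss :: "real \<Rightarrow> real \<Rightarrow> real^'n^'n \<Rightarrow> real \<times> (real^'n) \<Rightarrow> real" where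
  "gauss_loss \<gamma> s1 S2 w =
     (\<Sum>y\<in>{-1, 1::real}. (1/2) *
        (\<integral>x1. (\<integral>x2. ell_exp (fst w * x1 + snd w \<bullet> x2) * mv_gauss_density S2 x2 \<partial>lborel)
               * normal_density (y * \<gamma>) s1 x1 \<partial>lborel))"

definition r_fun :: "real \<Rightarrow> real" where
  "r_fun \<sigma> = (if 0 < \<sigma> \<and> \<sigma> \<le> 4 * sqrt 2 / sqrt pi
               then \<sigma>\<^sup>2 + \<sigma> * sqrt (2 * ln (4 * sqrt 2 / (sqrt pi * \<sigma>)))
               else 2 * \<sigma>\<^sup>2)"

definition S_set :: "real \<Rightarrow> real \<Rightarrow> real^'n^'n \<Rightarrow> real \<Rightarrow> (real \<times> (real^'n)) set" where
  "S_set \<gamma> s1 S2 R =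
     {w. fst w * \<gamma> \<ge> r_fun (R * sigma_tilde_max s1 S2) \<and> norm w \<le> R}"

end

theory Submission
  imports Defs
begin


lemma eig_finite:
  fixes A :: "real^'n^'n"
  assumes sym: "transpose A = A"
  shows "finite (mat_eigenvalues A)"
proof -
  define ev where "ev l = (SOME v. v \<noteq> 0 \<and> A *v v = l *\<^sub>R v)" for l
  have ev: "ev l \<noteq> 0 \<and> A *v ev l = l *\<^sub>R ev l" if "l \<in> mat_eigenvalues A" for l
  proof -
    from that obtain v where "v \<noteq> 0 \<and> A *v v = l *\<^sub>R v" unfolding mat_eigenvalues_def by auto
    thus ?thesis unfolding ev_def by (rule someI)
  qed
  have symdot: "(A *v u) \<bullet> v = u \<bullet> (A *v v)" for u v :: "real^'n"
    by (metis dot_lmul_matrix inner_commute sym vector_transpose_matrix)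
  have orth: "ev l \<bullet> ev m = 0" if "l \<in> mat_eigenvalues A" "m \<in> mat_eigenvalues A" "l \<noteq> m" for l m
  proof -
    have "l * (ev l \<bullet> ev m) = m * (ev l \<bullet> ev m)"
      using symdot[of "ev l" "ev m"] ev[OF that(1)] ev[OF that(2)] by simp
    thus ?thesis using that(3) by simp
  qed
  have inj: "inj_on ev (mat_eigenvalues A)"
  proof (rule inj_onI, rule ccontr)
    fix l m assume "l \<in> mat_eigenvalues A" "m \<in> mat_eigenvalues A" "ev l = ev m" "l \<noteq> m"
    with orth ev show False by (metis inner_eq_zero_iff)
  qed
  have "pairwise orthogonal (ev ` mat_eigenvalues A)"
    unfolding pairwise_def orthogonal_def using orth by auto
  moreover have "0 \<notin> ev ` mat_eigenvalues A" using ev by auto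
  ultimately have "independent (ev ` mat_eigenvalues A)"
    by (rule pairwise_orthogonal_independent)
  hence "finite (ev ` mat_eigenvalues A)" using independent_imp_finite by blast
  thus ?thesis using inj finite_imageD by blast
qed

lemma sigma_max_pos:
  fixes S2 :: "real^'n^'n"
  assumes "pos_def_mat S2" "s1 > 0"
  shows "sigma_tilde_max s1 S2 > 0"
proof -
  let ?A = "Sigma_tilde s1 S2"
  have sym: "transpose ?A = ?A"
    using assms(1) unfolding pos_def_mat_def Sigma_tilde_def
    by (auto simp: transpose_def vec_eq_iff split: sum.splits)
  have "s1\<^sup>2 \<in> mat_eigenvalues ?A"
    unfolding mat_eigenvalues_def
  proof (intro CollectI exI conjI)
    show "axis (Inr ()) 1 \<noteq> (0::real^('n+unit))" by (simp add: axis_eq_0_iff)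
    show "?A *v axis (Inr ()) 1 = s1\<^sup>2 *\<^sub>R axis (Inr ()) 1"
      unfolding matrix_vector_mult_basis by (auto simp: vec_eq_iff column_def Sigma_tilde_def axis_def
            split: sum.splits if_splits)
  qed
  hence "s1\<^sup>2 \<le> sigma_tilde_max s1 S2"
    unfolding sigma_tilde_max_def using eig_finite[OF sym] by simp
  thus ?thesis using assms(2) by (smt (verit) zero_less_power)
qed



lemma pd_ker: assumes "pos_def_mat A" "A *v x = 0" shows "x = 0"
  using assms unfolding pos_def_mat_def by force

lemma pd_invertible: assumes "pos_def_mat (A::real^'n^'n)" shows "invertible A"
  using pd_ker[OF assms] matrix_left_invertible_ker invertible_left_inverse by blast

lemma pd_inv1: assumes "pos_def_mat (A::real^'n^'n)" shows "A *v (matrix_inv A *v x) = x"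
proof -
  have "A ** matrix_inv A = mat 1"
    using pd_invertible[OF assms] unfolding matrix_inv_def invertible_def by (rule someI_ex[THEN conjunct1])
  thus ?thesis by (simp add: matrix_vector_mul_assoc)
qed

lemma pd_inv2: assumes "pos_def_mat (A::real^'n^'n)" shows "matrix_inv A *v (A *v x) = x"
proof -
  have "matrix_inv A ** A = mat 1"
    using pd_invertible[OF assms] unfolding matrix_inv_def invertible_def by (rule someI_ex[THEN conjunct2])
  thus ?thesis by (simp add: matrix_vector_mul_assoc)
qed

lemma pd_symdot: assumes "pos_def_mat (A::real^'n^'n)" shows "(A *v u) \<bullet> v = u \<bullet> (A *v v)"
  using assms unfolding pos_def_mat_def
  by (metis dot_lmul_matrix inner_commute vector_transpose_matrix)

lemma pd_det_pos: assumes "pos_def_mat (A::real^'n^'n)" shows "det A > 0"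
proof (rule ccontr)
  assume na: "\<not> det A > 0"
  define M where "M s = (\<chi> i j. (if i = j then 1 - s else 0) + s * A$i$j)" for s :: real
  have Mv: "M s *v x = (1-s) *\<^sub>R x + s *\<^sub>R (A *v x)" for s x
  proof -
    have t: "((if i=j then 1-s else 0) + s*A$i$j) * x$j = (if i=j then (1-s)*x$j else 0) + s*(A$i$j*x$j)" for i j
      by (simp add: algebra_simps)
    show ?thesis
      by (simp add: vec_eq_iff matrix_vector_mult_def M_def t sum.distrib sum_distrib_left)
  qed
  have nz: "det (M s) \<noteq> 0" if "0 \<le> s" "s \<le> 1" for s
  proof -
    have "x = 0" if "M s *v x = 0" for x
    proof (rule ccontr)
      assume "x \<noteq> 0"
      hence p: "x \<bullet> (A *v x) > 0" "x \<bullet> x > 0" using assms unfolding pos_def_mat_def by auto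
      have e: "x \<bullet> (M s *v x) = (1-s) * (x \<bullet> x) + s * (x \<bullet> (A *v x))"
        unfolding Mv by (simp add: inner_add_right)
      have "(1-s) * (x \<bullet> x) + s * (x \<bullet> (A *v x)) > 0"
      proof (cases "s = 0")
        case True thus ?thesis using p by simp
      next
        case False
        hence "s * (x \<bullet> (A *v x)) > 0" using p \<open>0 \<le> s\<close> by simp
        moreover have "(1-s) * (x \<bullet> x) \<ge> 0" using p \<open>s \<le> 1\<close> by simp
        ultimately show ?thesis by linarith
      qed
      thus False using that e by simp
    qed
    hence "invertible (M s)" using matrix_left_invertible_ker invertible_left_inverse by blast
    thus ?thesis using invertible_det_nz by blast
  qed
  have M1: "M 1 = A" by (simp add: M_def vec_eq_iff)
  have M0: "M 0 = mat 1" by (simp add: M_def mat_def vec_eq_iff)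
  have Mij: "M s $ i $ j = (if i = j then 1 else 0) + s * (A$i$j - (if i = j then 1 else 0))" for s i j
    by (simp add: M_def algebra_simps)
  have cont: "\<forall>s. 0 \<le> s \<and> s \<le> 1 \<longrightarrow> isCont (\<lambda>s. det (M s)) s"
    unfolding det_def Mij by (intro allI impI continuous_intros)
  have "det (M 1) \<le> 0" using na M1 by simp
  moreover have "0 \<le> det (M 0)" using M0 by simp
  ultimately obtain s where "0 \<le> s" "s \<le> 1" "det (M s) = 0"
    using IVT2[of "\<lambda>s. det (M s)" 1 0 0, OF _ _ _ cont] by auto
  with nz show False by blast
qed

lemma pd_quad_lower:
  assumes "pos_def_mat (A::real^'n^'n)"
  shows "\<exists>\<mu>>0. \<forall>x. x \<bullet> (A *v x) \<ge> \<mu> * (x \<bullet> x)"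
proof -
  have "compact (sphere (0::real^'n) 1)" by (rule compact_sphere)
  moreover have "sphere (0::real^'n) 1 \<noteq> {}"
  proof -
    have "(axis undefined 1 :: real^'n) \<in> sphere 0 1" by simp
    thus ?thesis by blast
  qed
  moreover have "continuous_on (sphere 0 1) (\<lambda>x::real^'n. x \<bullet> (A *v x))"
    by (intro continuous_on_inner continuous_on_id matrix_vector_mult_linear_continuous_on)
  ultimately have "\<exists>x\<in>sphere 0 1. \<forall>y\<in>sphere 0 1. x \<bullet> (A *v x) \<le> y \<bullet> (A *v y)"
    by (rule continuous_attains_inf)
  then obtain x0 where x0: "x0 \<in> sphere 0 1" "\<And>y. y \<in> sphere 0 1 \<Longrightarrow> x0 \<bullet> (A *v x0) \<le> y \<bullet> (A *v y)"
    by blast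
  define \<mu> where "\<mu> = x0 \<bullet> (A *v x0)"
  have "x0 \<noteq> 0" using x0 by auto
  hence "\<mu> > 0" using assms unfolding pos_def_mat_def \<mu>_def by auto
  moreover have "x \<bullet> (A *v x) \<ge> \<mu> * (x \<bullet> x)" for x
  proof (cases "x = 0")
    case False
    define y where "y = (1 / norm x) *\<^sub>R x"
    have "y \<in> sphere 0 1" using False by (simp add: y_def)
    hence "\<mu> \<le> y \<bullet> (A *v y)" using x0 \<mu>_def by auto
    also have "\<dots> = (x \<bullet> (A *v x)) / (x \<bullet> x)"
      by (simp add: y_def matrix_vector_mult_scaleR power2_eq_square power2_norm_eq_inner[symmetric])
    finally have "\<mu> \<le> (x \<bullet> (A *v x)) / (x \<bullet> x)" .
    moreover have "x \<bullet> x > 0" using False by simp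
    ultimately show ?thesis by (simp add: pos_le_divide_eq)
  qed simp
  ultimately show ?thesis by blast
qed



lemma DERIV_integral:
  fixes f :: "real \<Rightarrow> 'a \<Rightarrow> real"
  assumes int: "\<And>s. integrable M (f s)"
    and f'm: "f' \<in> borel_measurable M"
    and g: "integrable M g"
    and lip: "\<And>s x. x \<in> space M \<Longrightarrow> \<bar>f s x - f s0 x\<bar> \<le> g x * \<bar>s - s0\<bar>"
    and d: "AE x in M. ((\<lambda>s. f s x) has_real_derivative f' x) (at s0)"
  shows "((\<lambda>s. \<integral>x. f s x \<partial>M) has_real_derivative (\<integral>x. f' x \<partial>M)) (at s0)"
  unfolding has_field_derivative_iff
proof (subst tendsto_at_iff_sequentially, intro allI impI)
  fix X :: "nat \<Rightarrow> real"
  assume X: "\<forall>i. X i \<in> UNIV - {s0}" "X \<longlonglongrightarrow> s0"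
  define Q where "Q i x = (f (X i) x - f s0 x) / (X i - s0)" for i x
  have eq: "((\<lambda>s. ((\<integral>x. f s x \<partial>M) - (\<integral>x. f s0 x \<partial>M)) / (s - s0)) \<circ> X) i = (\<integral>x. Q i x \<partial>M)" for i
    unfolding Q_def comp_def using int by (simp add: integral_diff)
  have "(\<lambda>i. \<integral>x. Q i x \<partial>M) \<longlonglongrightarrow> (\<integral>x. f' x \<partial>M)"
  proof (rule integral_dominated_convergence[where w = g])
    show "f' \<in> borel_measurable M" by fact
    show "Q i \<in> borel_measurable M" for i
      unfolding Q_def using int[THEN borel_measurable_integrable] by measurable
    show "integrable M g" by fact
    show "AE x in M. (\<lambda>i. Q i x) \<longlonglongrightarrow> f' x"
      using d
    proof (rule AE_mp, intro AE_I2 impI)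
      fix x assume "((\<lambda>s. f s x) has_real_derivative f' x) (at s0)"
      hence "((\<lambda>s. (f s x - f s0 x) / (s - s0)) \<longlongrightarrow> f' x) (at s0)"
        by (simp add: has_field_derivative_iff)
      thus "(\<lambda>i. Q i x) \<longlonglongrightarrow> f' x"
        unfolding Q_def using X by (subst (asm) tendsto_at_iff_sequentially) (auto simp: comp_def)
    qed
    show "AE x in M. norm (Q i x) \<le> g x" for i
    proof (intro AE_I2)
      fix x assume "x \<in> space M"
      have "X i \<noteq> s0" using X by auto
      thus "norm (Q i x) \<le> g x" unfolding Q_def using lip[OF \<open>x \<in> space M\<close>, of "X i"]
        by (simp add: abs_divide divide_le_eq)
    qed
  qed
  thus "((\<lambda>s. ((\<integral>x. f s x \<partial>M) - (\<integral>x. f s0 x \<partial>M)) / (s - s0)) \<circ> X) \<longlonglongrightarrow> (\<integral>x. f' x \<partial>M)"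
    unfolding eq .
qed

lemma integral_neg_AE_lborel:
  fixes f :: "'a::euclidean_space \<Rightarrow> real"
  assumes int: "integrable lborel f" and neg: "AE x in lborel. f x < 0"
  shows "integral\<^sup>L lborel f < 0"
proof -
  have int': "integrable lborel (\<lambda>x. - f x)" using int by simp
  have nn: "AE x in lborel. 0 \<le> - f x" using neg by eventually_elim simp
  have ge: "integral\<^sup>L lborel (\<lambda>x. - f x) \<ge> 0" using nn by (rule integral_nonneg_AE)
  have "integral\<^sup>L lborel (\<lambda>x. - f x) \<noteq> 0"
  proof
    assume "integral\<^sup>L lborel (\<lambda>x. - f x) = 0"
    hence "AE x in lborel. - f x = 0" using integral_nonneg_eq_0_iff_AE[OF int' nn] by simp
    hence c: "AE x in lborel. - f x = 0 \<and> f x < 0" using neg by (rule AE_conjI)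
    have "AE x in (lborel::'a measure). False" by (rule AE_mp[OF c]) (rule AE_I2, auto)
    hence "ae_filter lborel = (bot :: 'a filter)" using trivial_limit_def by blast
    thus False by (simp add: ae_filter_eq_bot_iff)
  qed
  with ge show ?thesis by simp
qed

lemma lborel_eq_translate:
  "(lborel :: 'a::euclidean_space measure) = distr lborel borel (\<lambda>x. t + x)"
  using lborel_affine[of 1 t] by (simp add: density_1)

lemma lborel_eq_reflect:
  "(lborel :: 'a::euclidean_space measure) = distr lborel borel (\<lambda>x. - x)"
  using lborel_affine[of "-1" 0] by (simp add: density_1)

lemma integral_translate:
  fixes f :: "'a::euclidean_space \<Rightarrow> real"
  assumes [measurable]: "f \<in> borel_measurable borel"
  shows "integral\<^sup>L lborel f = integral\<^sup>L lborel (\<lambda>x. f (t + x))"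
    and "integrable lborel f \<longleftrightarrow> integrable lborel (\<lambda>x. f (t + x))"
proof -
  have e: "(lborel :: 'a measure) = distr lborel borel (\<lambda>x. t + x)" by (rule lborel_eq_translate)
  have "integral\<^sup>L lborel f = integral\<^sup>L (distr lborel borel (\<lambda>x. t + x)) f"
    by (rule arg_cong[OF e, of "\<lambda>M. integral\<^sup>L M f"])
  also have "\<dots> = integral\<^sup>L lborel (\<lambda>x. f (t + x))" by (rule integral_distr) simp_all
  finally show "integral\<^sup>L lborel f = integral\<^sup>L lborel (\<lambda>x. f (t + x))" .
  have "integrable lborel f = integrable (distr lborel borel (\<lambda>x. t + x)) f"
    by (rule arg_cong[OF e, of "\<lambda>M. integrable M f"])
  also have "\<dots> = integrable lborel (\<lambda>x. f (t + x))" by (rule integrable_distr_eq) simp_all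
  finally show "integrable lborel f \<longleftrightarrow> integrable lborel (\<lambda>x. f (t + x))" .
qed

lemma integral_reflect:
  fixes f :: "'a::euclidean_space \<Rightarrow> real"
  assumes [measurable]: "f \<in> borel_measurable borel"
  shows "integral\<^sup>L lborel f = integral\<^sup>L lborel (\<lambda>x. f (- x))"
    and "integrable lborel f \<longleftrightarrow> integrable lborel (\<lambda>x. f (- x))"
proof -
  have e: "(lborel :: 'a measure) = distr lborel borel (\<lambda>x. - x)" by (rule lborel_eq_reflect)
  have "integral\<^sup>L lborel f = integral\<^sup>L (distr lborel borel (\<lambda>x. - x)) f"
    by (rule arg_cong[OF e, of "\<lambda>M. integral\<^sup>L M f"])
  also have "\<dots> = integral\<^sup>L lborel (\<lambda>x. f (- x))" by (rule integral_distr) simp_all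
  finally show "integral\<^sup>L lborel f = integral\<^sup>L lborel (\<lambda>x. f (- x))" .
  have "integrable lborel f = integrable (distr lborel borel (\<lambda>x. - x)) f"
    by (rule arg_cong[OF e, of "\<lambda>M. integrable M f"])
  also have "\<dots> = integrable lborel (\<lambda>x. f (- x))" by (rule integrable_distr_eq) simp_all
  finally show "integrable lborel f \<longleftrightarrow> integrable lborel (\<lambda>x. f (- x))" .
qed

lemma AE_hyperplane:
  fixes b :: "'a::euclidean_space"
  assumes "b \<noteq> 0"
  shows "AE x in lborel. b \<bullet> x \<noteq> c"
proof -
  have neg: "negligible {x. b \<bullet> x = c}" using assms by (intro negligible_hyperplane) simp
  have "{x. b \<bullet> x = c} \<in> sets lborel" by simp
  hence "{x. b \<bullet> x = c} \<in> null_sets lborel"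
    using neg negligible_iff_null_sets null_sets_completion_iff by blast
  thus ?thesis by (rule AE_I') auto
qed

definition dl :: "real \<Rightarrow> real" where "dl z = - sgn z * exp (- \<bar>z\<bar>)"

lemma ell_exp_pos: "0 < ell_exp z" and ell_exp_le1: "ell_exp z \<le> 1"
  by (auto simp: ell_exp_def)

lemma ell_exp_lip: "\<bar>ell_exp a - ell_exp c\<bar> \<le> \<bar>a - c\<bar>"
proof -
  have k: "exp (- \<bar>u\<bar>) - exp (- \<bar>v\<bar>) \<le> \<bar>v\<bar> - \<bar>u\<bar>" if "\<bar>u\<bar> \<le> \<bar>v\<bar>" for u v :: real
  proof -
    have "1 - (\<bar>v\<bar> - \<bar>u\<bar>) \<le> exp (- (\<bar>v\<bar> - \<bar>u\<bar>))" using exp_ge_add_one_self[of "\<bar>u\<bar> - \<bar>v\<bar>"] by (simp add: algebra_simps)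
    hence "exp (- \<bar>u\<bar>) * (1 - (\<bar>v\<bar> - \<bar>u\<bar>)) \<le> exp (- \<bar>u\<bar>) * exp (- (\<bar>v\<bar> - \<bar>u\<bar>))"
      by (simp add: mult_left_mono)
    also have "\<dots> = exp (- \<bar>v\<bar>)" by (simp add: exp_add[symmetric])
    finally have "exp (- \<bar>u\<bar>) - exp (- \<bar>v\<bar>) \<le> exp (- \<bar>u\<bar>) * (\<bar>v\<bar> - \<bar>u\<bar>)" by (simp add: algebra_simps)
    also have "\<dots> \<le> 1 * (\<bar>v\<bar> - \<bar>u\<bar>)" using that by (intro mult_right_mono) auto
    finally show ?thesis by simp
  qed
  have t: "\<bar>\<bar>a\<bar> - \<bar>c\<bar>\<bar> \<le> \<bar>a - c\<bar>" by (rule abs_triangle_ineq3)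
  show ?thesis
  proof (cases "\<bar>a\<bar> \<le> \<bar>c\<bar>")
    case True
    have "exp (- \<bar>c\<bar>) \<le> exp (- \<bar>a\<bar>)" using True by simp
    thus ?thesis unfolding ell_exp_def using k[OF True] t by linarith
  next
    case False
    hence F: "\<bar>c\<bar> \<le> \<bar>a\<bar>" by simp
    have "exp (- \<bar>a\<bar>) \<le> exp (- \<bar>c\<bar>)" using F by simp
    thus ?thesis unfolding ell_exp_def using k[OF F] t by linarith
  qed
qed

lemma ell_exp_deriv:
  assumes "z \<noteq> 0" shows "(ell_exp has_real_derivative dl z) (at z)"
proof (cases "z > 0")
  case True
  have "((\<lambda>y. exp (- y)) has_real_derivative dl z) (at z)"
    using True by (auto intro!: derivative_eq_intros simp: dl_def)
  thus ?thesis
    by (rule has_field_derivative_transform_within_open[where S="{0<..}"])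
       (use True in \<open>auto simp: ell_exp_def dl_def\<close>)
next
  case False
  hence "z < 0" using assms by simp
  have "((\<lambda>y. exp y) has_real_derivative dl z) (at z)"
    using \<open>z < 0\<close> by (auto intro!: derivative_eq_intros simp: dl_def)
  thus ?thesis
    by (rule has_field_derivative_transform_within_open[where S="{..<0}"])
       (use \<open>z < 0\<close> in \<open>auto simp: ell_exp_def dl_def\<close>)
qed

lemma ell_exp_measurable[measurable]: "ell_exp \<in> borel_measurable borel"
  unfolding ell_exp_def by measurable

lemma dl_measurable[measurable]: "dl \<in> borel_measurable borel"
  unfolding dl_def by measurable

lemma dl_abs_le: "\<bar>dl z\<bar> \<le> 1"
  by (auto simp: dl_def abs_mult sgn_if)



lemma gauss1_integrable:
  assumes "c > 0"
  shows "integrable lborel (\<lambda>u::real. exp (- c * u\<^sup>2))"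
proof -
  define \<sigma> where "\<sigma> = 1 / sqrt (2 * c)"
  have s2: "\<sigma>\<^sup>2 = 1 / (2 * c)" using assms by (simp add: \<sigma>_def power_divide)
  have sp: "\<sigma> > 0" unfolding \<sigma>_def using assms by (intro divide_pos_pos) auto
  have eq: "exp (- c * u\<^sup>2) = sqrt (2 * pi * \<sigma>\<^sup>2) * normal_density 0 \<sigma> u" for u
    unfolding normal_density_def s2 using assms sp by (simp add: field_simps)
  show ?thesis unfolding eq using sp by (intro integrable_mult_right integrable_normal_density) auto
qed

lemma gauss_integrable:
  assumes "c > 0"
  shows "integrable lborel (\<lambda>x::'a::euclidean_space. exp (- c * (x \<bullet> x)))"
proof -
  have fin1: "(\<integral>\<^sup>+u. ennreal (exp (- c * u\<^sup>2)) \<partial>lborel) \<noteq> \<infinity>"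
    using integrableD(2)[OF gauss1_integrable[OF assms]] .
  have eq: "ennreal (exp (- c * (x \<bullet> x))) = (\<Prod>b\<in>Basis. ennreal (exp (- c * (x \<bullet> b)\<^sup>2)))" for x :: 'a
  proof -
    have "- c * (x \<bullet> x) = (\<Sum>b\<in>Basis. - c * (x \<bullet> b)\<^sup>2)"
      by (subst euclidean_inner) (simp add: sum_distrib_left power2_eq_square)
    hence "exp (- c * (x \<bullet> x)) = (\<Prod>b\<in>Basis. exp (- c * (x \<bullet> b)\<^sup>2))"
      by (simp add: exp_sum)
    thus ?thesis by (simp add: prod_ennreal)
  qed
  have "(\<integral>\<^sup>+x. ennreal (exp (- c * (x \<bullet> x))) \<partial>(lborel::'a measure))
      = (\<Prod>b\<in>(Basis::'a set). (\<integral>\<^sup>+u. ennreal (exp (- c * u\<^sup>2)) \<partial>lborel))"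
    unfolding eq by (rule nn_integral_lborel_prod) auto
  also have "\<dots> \<noteq> \<infinity>" using fin1 by (simp add: power_eq_top_ennreal)
  finally have fin: "(\<integral>\<^sup>+x. ennreal (exp (- c * (x \<bullet> x))) \<partial>(lborel::'a measure)) < \<infinity>"
    by (simp add: top.not_eq_extremum)
  show ?thesis
    by (rule integrableI_bounded) (use fin in auto)
qed

lemma Q_lower:
  assumes pd: "pos_def_mat (A::real^'n^'n)"
  shows "\<exists>l>0. \<forall>x. x \<bullet> (matrix_inv A *v x) \<ge> l * (x \<bullet> x)"
proof -
  obtain \<mu> where mu: "\<mu> > 0" "\<And>u. u \<bullet> (A *v u) \<ge> \<mu> * (u \<bullet> u)"
    using pd_quad_lower[OF pd] by blast
  obtain K where K: "K > 0" "\<And>u. norm (A *v u) \<le> norm u * K"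
    using bounded_linear.pos_bounded[OF matrix_vector_mul_bounded_linear[of A]] by blast
  have "x \<bullet> (matrix_inv A *v x) \<ge> (\<mu> / K\<^sup>2) * (x \<bullet> x)" for x
  proof -
    define u where "u = matrix_inv A *v x"
    have xu: "x = A *v u" unfolding u_def using pd_inv1[OF pd] by simp
    have "x \<bullet> u = u \<bullet> (A *v u)" unfolding xu by (simp add: inner_commute)
    hence 1: "x \<bullet> u \<ge> \<mu> * (u \<bullet> u)" using mu by simp
    have "norm x \<le> norm u * K" unfolding xu by (rule K(2))
    hence "(norm x)\<^sup>2 \<le> (norm u * K)\<^sup>2" by (simp add: power_mono)
    hence "x \<bullet> x \<le> (u \<bullet> u) * K\<^sup>2" by (simp add: power2_norm_eq_inner[symmetric] power_mult_distrib)
    hence "(\<mu> / K\<^sup>2) * (x \<bullet> x) \<le> \<mu> * (u \<bullet> u)"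
      using mu K by (simp add: field_simps)
    thus ?thesis using 1 unfolding u_def by linarith
  qed
  moreover have "\<mu> / K\<^sup>2 > 0" using mu K by simp
  ultimately show ?thesis by blast
qed

definition gconst :: "real^'n^'n \<Rightarrow> real" where
  "gconst A = sqrt ((2 * pi) ^ CARD('n) * det A)"

lemma gconst_pos: assumes "pos_def_mat A" shows "gconst A > 0"
proof -
  have "det A > 0" using pd_det_pos[OF assms] .
  moreover have "(2 * pi) ^ CARD('n) > 0" by simp
  ultimately show ?thesis unfolding gconst_def by simp
qed

lemma rho_eq: "mv_gauss_density A x = exp (- (x \<bullet> (matrix_inv A *v x)) / 2) / gconst A"
  by (simp add: mv_gauss_density_def gconst_def)

lemma rho_pos: assumes "pos_def_mat A" shows "mv_gauss_density A x > 0"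
  unfolding rho_eq using gconst_pos[OF assms] by simp

lemma mvm_neg: "(A::real^'n^'m) *v (- x) = - (A *v x)"
  by (simp add: vec_eq_iff matrix_vector_mult_def sum_negf)

lemma rho_even: "mv_gauss_density A (- x) = mv_gauss_density A x"
  unfolding rho_eq by (simp add: mvm_neg)

lemma rho_cont: "continuous_on UNIV (mv_gauss_density A)"
  unfolding rho_eq[abs_def] divide_inverse
  by (intro continuous_intros continuous_on_inner continuous_on_id matrix_vector_mult_linear_continuous_on)

lemma rho_measurable[measurable]: "mv_gauss_density A \<in> borel_measurable borel"
  using rho_cont by (rule borel_measurable_continuous_onI)

lemma rho_integrable:
  fixes A :: "real^'n^'n"
  assumes pd: "pos_def_mat A"
  shows "integrable lborel (mv_gauss_density A)"
proof -
  obtain l where l: "l > 0" "\<And>x. x \<bullet> (matrix_inv A *v x) \<ge> l * (x \<bullet> x)"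
    using Q_lower[OF pd] by blast
  have gi: "integrable lborel (\<lambda>x::real^'n. exp (- (l/2) * (x \<bullet> x)))"
    using gauss_integrable[of "l/2"] l by simp
  have int: "integrable lborel (\<lambda>x::real^'n. exp (- (l/2) * (x \<bullet> x)) / gconst A)"
    by (rule integrable_divide_zero) (rule gi)
  have bnd: "norm (mv_gauss_density A x) \<le> norm (exp (- (l/2) * (x \<bullet> x)) / gconst A)" for x
  proof -
    have "exp (- (x \<bullet> (matrix_inv A *v x)) / 2) \<le> exp (- (l/2) * (x \<bullet> x))"
      using l(2)[of x] by simp
    thus ?thesis using rho_pos[OF pd, of x] gconst_pos[OF pd] unfolding rho_eq
      by (simp add: divide_right_mono)
  qed
  show ?thesis
    by (rule Bochner_Integration.integrable_bound[OF int]) (simp, rule AE_I2, rule bnd)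
qed

lemma rho_int_pos:
  assumes pd: "pos_def_mat A"
  shows "(\<integral>x. mv_gauss_density A x \<partial>lborel) > 0"
proof -
  have "(\<integral>x. - mv_gauss_density A x \<partial>lborel) < 0"
    using rho_integrable[OF pd] rho_pos[OF pd] by (intro integral_neg_AE_lborel) auto
  thus ?thesis by simp
qed

lemma rho_shift:
  assumes pd: "pos_def_mat (A::real^'n^'n)" and b: "b \<noteq> 0"
  defines "q \<equiv> b \<bullet> (A *v b)"
  defines "v \<equiv> (1/q) *\<^sub>R (A *v b)"
  shows "q > 0" "b \<bullet> v = 1"
    "mv_gauss_density A (x - s *\<^sub>R v) = mv_gauss_density A x * exp ((2 * s * (b \<bullet> x) - s\<^sup>2) / (2 * q))"
proof -
  show q: "q > 0" using pd b unfolding q_def pos_def_mat_def by auto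
  show bv: "b \<bullet> v = 1" using q unfolding v_def q_def by simp
  define u where "u = matrix_inv A *v x"
  have xu: "A *v u = x" unfolding u_def using pd_inv1[OF pd] by simp
  have iv: "matrix_inv A *v v = (1/q) *\<^sub>R b"
    unfolding v_def by (simp add: matrix_vector_mult_scaleR pd_inv2[OF pd])
  have vu: "v \<bullet> u = (b \<bullet> x) / q"
    unfolding v_def using pd_symdot[OF pd, of b u] xu by simp
  have vu': "u \<bullet> v = (b \<bullet> x) / q" using vu by (simp add: inner_commute)
  have vb: "v \<bullet> b = 1" unfolding v_def using q by (simp add: inner_commute q_def)
  have "(x - s *\<^sub>R v) \<bullet> (matrix_inv A *v (x - s *\<^sub>R v))
      = (x - s *\<^sub>R v) \<bullet> (u - (s/q) *\<^sub>R b)"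
    by (simp add: matrix_vector_mult_diff_distrib matrix_vector_mult_scaleR iv u_def)
  also have "\<dots> = x \<bullet> u - (s/q) * (x \<bullet> b) - s * (v \<bullet> u) + s * (s/q) * (v \<bullet> b)"
    by (simp add: inner_diff_left inner_diff_right algebra_simps)
  also have "\<dots> = x \<bullet> u - (2 * s * (b \<bullet> x) - s\<^sup>2) / q"
    using q by (simp add: vu vu' vb bv inner_commute[of x b] field_simps power2_eq_square)
  finally have e: "(x - s *\<^sub>R v) \<bullet> (matrix_inv A *v (x - s *\<^sub>R v)) = x \<bullet> u - (2 * s * (b \<bullet> x) - s\<^sup>2) / q" .
  show "mv_gauss_density A (x - s *\<^sub>R v) = mv_gauss_density A x * exp ((2 * s * (b \<bullet> x) - s\<^sup>2) / (2 * q))"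
    unfolding rho_eq e u_def[symmetric]
    by (simp add: exp_add[symmetric] diff_divide_distrib add_divide_distrib)
qed



definition hfun :: "real^'n^'n \<Rightarrow> real^'n \<Rightarrow> real \<Rightarrow> real" where
  "hfun A b s = (\<integral>x. ell_exp (s + b \<bullet> x) * mv_gauss_density A x \<partial>lborel)"

definition Hfun :: "real^'n^'n \<Rightarrow> real^'n \<Rightarrow> real \<Rightarrow> real" where
  "Hfun A b s = (\<integral>x. dl (s + b \<bullet> x) * mv_gauss_density A x \<partial>lborel)"

definition Cint :: "real^'n^'n \<Rightarrow> real" where
  "Cint A = (\<integral>x. mv_gauss_density A x \<partial>lborel)"

lemma bnd_helper: "\<bar>u\<bar> \<le> 1 \<Longrightarrow> 0 < (r::real) \<Longrightarrow> \<bar>u\<bar> * \<bar>r\<bar> \<le> r"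
  by (simp add: mult_left_le_one_le)

lemma bnd_helper2: "\<bar>u\<bar> \<le> 1 \<Longrightarrow> \<bar>u\<bar> * \<bar>r::real\<bar> \<le> \<bar>r\<bar>"
  by (simp add: mult_left_le_one_le)

lemma ell_abs: "\<bar>ell_exp z\<bar> \<le> 1"
  using ell_exp_pos[of z] ell_exp_le1[of z] by simp

lemma h_int:
  fixes A :: "real^'n^'n" assumes pd: "pos_def_mat A"
  shows "integrable lborel (\<lambda>x. ell_exp (s + b \<bullet> x) * mv_gauss_density A x)"
  by (rule Bochner_Integration.integrable_bound[OF rho_integrable[OF pd]])
     (simp, rule AE_I2, simp add: abs_mult bnd_helper2 ell_abs)

lemma H_int:
  fixes A :: "real^'n^'n" assumes pd: "pos_def_mat A"
  shows "integrable lborel (\<lambda>x. dl (s + b \<bullet> x) * mv_gauss_density A x)"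
  by (rule Bochner_Integration.integrable_bound[OF rho_integrable[OF pd]])
     (simp, rule AE_I2, simp add: abs_mult bnd_helper2 dl_abs_le)

lemma h_lip:
  fixes A :: "real^'n^'n" assumes pd: "pos_def_mat A"
  shows "\<bar>hfun A b s - hfun A b s0\<bar> \<le> Cint A * \<bar>s - s0\<bar>"
proof -
  have "hfun A b s - hfun A b s0 = (\<integral>x. (ell_exp (s + b \<bullet> x) - ell_exp (s0 + b \<bullet> x)) * mv_gauss_density A x \<partial>lborel)"
    unfolding hfun_def using h_int[OF pd] by (simp add: integral_diff[symmetric] left_diff_distrib)
  also have "\<bar>\<dots>\<bar> \<le> (\<integral>x. \<bar>s - s0\<bar> * mv_gauss_density A x \<partial>lborel)"
  proof (rule integral_abs_bound_integral)
    show "integrable lborel (\<lambda>x. (ell_exp (s + b \<bullet> x) - ell_exp (s0 + b \<bullet> x)) * mv_gauss_density A x)"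
      using h_int[OF pd, of s b] h_int[OF pd, of s0 b] by (simp add: left_diff_distrib)
    show "integrable lborel (\<lambda>x. \<bar>s - s0\<bar> * mv_gauss_density A x)"
      using rho_integrable[OF pd] by simp
    fix x
    have "\<bar>ell_exp (s + b \<bullet> x) - ell_exp (s0 + b \<bullet> x)\<bar> \<le> \<bar>s - s0\<bar>"
      using ell_exp_lip[of "s + b \<bullet> x" "s0 + b \<bullet> x"] by simp
    thus "\<bar>(ell_exp (s + b \<bullet> x) - ell_exp (s0 + b \<bullet> x)) * mv_gauss_density A x\<bar> \<le> \<bar>s - s0\<bar> * mv_gauss_density A x"
      using rho_pos[OF pd, of x] by (simp add: abs_mult mult_right_mono)
  qed
  also have "\<dots> = Cint A * \<bar>s - s0\<bar>" unfolding Cint_def by simp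
  finally show ?thesis .
qed

lemma h_bound:
  fixes A :: "real^'n^'n" assumes pd: "pos_def_mat A"
  shows "\<bar>hfun A b s\<bar> \<le> Cint A"
  unfolding hfun_def Cint_def
  by (rule integral_abs_bound_integral[OF h_int[OF pd] rho_integrable[OF pd]])
     (simp add: abs_mult bnd_helper ell_abs rho_pos[OF pd])

lemma H_bound:
  fixes A :: "real^'n^'n" assumes pd: "pos_def_mat A"
  shows "\<bar>Hfun A b s\<bar> \<le> Cint A"
  unfolding Hfun_def Cint_def
  by (rule integral_abs_bound_integral[OF H_int[OF pd] rho_integrable[OF pd]])
     (simp add: abs_mult bnd_helper dl_abs_le rho_pos[OF pd])

lemma h_meas[measurable]: "hfun A b \<in> borel_measurable borel"
  unfolding hfun_def by measurable

lemma H_meas[measurable]: "Hfun A b \<in> borel_measurable borel"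
  unfolding Hfun_def by measurable

lemma h_deriv:
  fixes A :: "real^'n^'n" assumes pd: "pos_def_mat A" and nz: "b \<noteq> 0 \<or> s0 \<noteq> 0"
  shows "(hfun A b has_real_derivative Hfun A b s0) (at s0)"
  unfolding hfun_def[abs_def] Hfun_def
proof (rule DERIV_integral[where g = "mv_gauss_density A"])
  show "integrable lborel (\<lambda>x. ell_exp (s + b \<bullet> x) * mv_gauss_density A x)" for s
    by (rule h_int[OF pd])
  show "(\<lambda>x. dl (s0 + b \<bullet> x) * mv_gauss_density A x) \<in> borel_measurable lborel" by measurable
  show "integrable lborel (mv_gauss_density A)" by (rule rho_integrable[OF pd])
  fix s x
  have "\<bar>ell_exp (s + b \<bullet> x) - ell_exp (s0 + b \<bullet> x)\<bar> \<le> \<bar>s - s0\<bar>"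
    using ell_exp_lip[of "s + b \<bullet> x" "s0 + b \<bullet> x"] by simp
  show "\<bar>ell_exp (s + b \<bullet> x) * mv_gauss_density A x - ell_exp (s0 + b \<bullet> x) * mv_gauss_density A x\<bar>
        \<le> mv_gauss_density A x * \<bar>s - s0\<bar>"
  proof -
    have "\<bar>ell_exp (s + b \<bullet> x) * mv_gauss_density A x - ell_exp (s0 + b \<bullet> x) * mv_gauss_density A x\<bar>
        = \<bar>ell_exp (s + b \<bullet> x) - ell_exp (s0 + b \<bullet> x)\<bar> * mv_gauss_density A x"
      using rho_pos[OF pd, of x] by (simp add: left_diff_distrib[symmetric] abs_mult)
    also have "\<dots> \<le> \<bar>s - s0\<bar> * mv_gauss_density A x"
      using rho_pos[OF pd, of x] \<open>\<bar>ell_exp (s + b \<bullet> x) - ell_exp (s0 + b \<bullet> x)\<bar> \<le> \<bar>s - s0\<bar>\<close>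
      by (simp add: mult_right_mono)
    finally show ?thesis by (simp add: mult.commute)
  qed
next
  have ae: "AE x in lborel. b \<bullet> x \<noteq> - s0"
  proof (cases "b = 0")
    case True thus ?thesis using nz by simp
  next
    case False thus ?thesis by (rule AE_hyperplane)
  qed
  show "AE x in lborel. ((\<lambda>s. ell_exp (s + b \<bullet> x) * mv_gauss_density A x) has_real_derivative
          dl (s0 + b \<bullet> x) * mv_gauss_density A x) (at s0)"
    using ae
  proof (rule AE_mp, intro AE_I2 impI)
    fix x :: "real^'n" assume "b \<bullet> x \<noteq> - s0"
    hence "s0 + b \<bullet> x \<noteq> 0" by linarith
    hence "(ell_exp has_real_derivative dl (s0 + b \<bullet> x)) (at (s0 + b \<bullet> x))" by (rule ell_exp_deriv)
    hence "((\<lambda>s. ell_exp (s + b \<bullet> x)) has_real_derivative dl (s0 + b \<bullet> x)) (at s0)"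
      by (simp add: DERIV_shift)
    thus "((\<lambda>s. ell_exp (s + b \<bullet> x) * mv_gauss_density A x) has_real_derivative
          dl (s0 + b \<bullet> x) * mv_gauss_density A x) (at s0)"
      by (rule DERIV_cmult_right)
  qed
qed



lemma dl_odd: "dl (- z) = - dl z" by (simp add: dl_def sgn_minus)

lemma sign_key:
  assumes "s \<noteq> 0" "t \<noteq> 0" "q > 0"
  shows "s * (dl t * (exp ((2 * s * t - s\<^sup>2) / (2 * q)) - exp ((2 * s * (- t) - s\<^sup>2) / (2 * q)))) < 0"
proof -
  have iff: "exp ((2 * s * (- t) - s\<^sup>2) / (2 * q)) < exp ((2 * s * t - s\<^sup>2) / (2 * q)) \<longleftrightarrow> s * t > 0"
    using assms(3) by (simp add: divide_strict_right_mono_neg field_simps)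
  have iff2: "exp ((2 * s * t - s\<^sup>2) / (2 * q)) < exp ((2 * s * (- t) - s\<^sup>2) / (2 * q)) \<longleftrightarrow> s * t < 0"
    using assms(3) by (simp add: divide_strict_right_mono_neg field_simps)
  define D where "D = exp ((2 * s * t - s\<^sup>2) / (2 * q)) - exp ((2 * s * (- t) - s\<^sup>2) / (2 * q))"
  have Dp: "s * t > 0 \<Longrightarrow> D > 0" using iff unfolding D_def by simp
  have Dn: "s * t < 0 \<Longrightarrow> D < 0" using iff2 unfolding D_def by simp
  consider "s > 0" "t > 0" | "s > 0" "t < 0" | "s < 0" "t > 0" | "s < 0" "t < 0"
    using assms by linarith
  hence "s * (dl t * D) < 0"
  proof cases
    case 1
    hence "dl t < 0" "D > 0" using Dp by (simp_all add: dl_def)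
    hence "dl t * D < 0" by (simp add: mult_neg_pos)
    thus ?thesis using 1 by (simp add: mult_pos_neg)
  next
    case 2
    hence "dl t > 0" "D < 0" using Dn by (simp_all add: dl_def mult_pos_neg)
    hence "dl t * D < 0" by (simp add: mult_pos_neg)
    thus ?thesis using 2 by (simp add: mult_pos_neg)
  next
    case 3
    hence "dl t < 0" "D < 0" using Dn by (simp_all add: dl_def mult_neg_pos)
    hence "dl t * D > 0" by (simp add: mult_neg_neg)
    thus ?thesis using 3 by (simp add: mult_neg_pos)
  next
    case 4
    hence "dl t > 0" "D > 0" using Dp by (simp_all add: dl_def mult_neg_neg)
    hence "dl t * D > 0" by simp
    thus ?thesis using 4 by (simp add: mult_neg_pos)
  qed
  thus ?thesis unfolding D_def .
qed

lemma H_sign: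
  fixes A :: "real^'n^'n" assumes pd: "pos_def_mat A" and s: "s \<noteq> 0"
  shows "s * Hfun A b s < 0"
proof (cases "b = 0")
  case True
  have "Hfun A b s = dl s * Cint A" unfolding Hfun_def Cint_def True by simp
  moreover have "Cint A > 0" unfolding Cint_def by (rule rho_int_pos[OF pd])
  moreover have "s * dl s < 0" using s by (cases "s > 0") (auto simp: dl_def mult_pos_neg mult_neg_pos)
  ultimately show ?thesis by (simp add: mult.assoc[symmetric] mult_neg_pos)
next
  case False
  define q where "q = b \<bullet> (A *v b)"
  define v where "v = (1/q) *\<^sub>R (A *v b)"
  have q: "q > 0" and bv: "b \<bullet> v = 1"
    and sh: "\<And>x s. mv_gauss_density A (x - s *\<^sub>R v) = mv_gauss_density A x * exp ((2 * s * (b \<bullet> x) - s\<^sup>2) / (2 * q))"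
    using rho_shift[OF pd False] unfolding q_def v_def by auto
  define E where "E t = exp ((2 * s * t - s\<^sup>2) / (2 * q))" for t
  define G where "G x = dl (s + b \<bullet> x) * mv_gauss_density A x" for x
  define K where "K y = dl (b \<bullet> y) * mv_gauss_density A y * E (b \<bullet> y)" for y
  have G_meas[measurable]: "G \<in> borel_measurable borel" unfolding G_def by measurable
  have K_meas[measurable]: "K \<in> borel_measurable borel" unfolding K_def E_def by measurable
  have GK: "G (- (s *\<^sub>R v) + y) = K y" for y
  proof -
    have "s + b \<bullet> (- (s *\<^sub>R v) + y) = b \<bullet> y" using bv by (simp add: inner_diff_right)
    moreover have "- (s *\<^sub>R v) + y = y - s *\<^sub>R v" by simp
    ultimately show ?thesis unfolding G_def K_def E_def by (simp only: sh)
  qed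
  have Gint: "integrable lborel G" unfolding G_def by (rule H_int[OF pd])
  have H1: "Hfun A b s = integral\<^sup>L lborel K"
    unfolding Hfun_def G_def[symmetric] integral_translate(1)[OF G_meas, of "- (s *\<^sub>R v)"] GK ..
  have Kint: "integrable lborel K"
    using Gint unfolding integral_translate(2)[OF G_meas, of "- (s *\<^sub>R v)"] GK .
  have H2: "integral\<^sup>L lborel K = integral\<^sup>L lborel (\<lambda>y. K (- y))"
    by (rule integral_reflect(1)[OF K_meas])
  have Kint2: "integrable lborel (\<lambda>y. K (- y))"
    using Kint unfolding integral_reflect(2)[OF K_meas] .
  have "s * Hfun A b s = (\<integral>y. s * (K y + K (- y)) \<partial>lborel) / 2"
    using H1 H2 Kint Kint2 by (simp add: integral_add)
  also have "\<dots> < 0"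
  proof -
    have "(\<integral>y. s * (K y + K (- y)) \<partial>lborel) < 0"
    proof (rule integral_neg_AE_lborel)
      show "integrable lborel (\<lambda>y. s * (K y + K (- y)))" using Kint Kint2 by simp
      show "AE y in lborel. s * (K y + K (- y)) < 0"
        using AE_hyperplane[OF False, of 0]
      proof (rule AE_mp, intro AE_I2 impI)
        fix y :: "real^'n" assume t: "b \<bullet> y \<noteq> 0"
        have eqK: "K y + K (- y) = mv_gauss_density A y * (dl (b \<bullet> y) * (E (b \<bullet> y) - E (- (b \<bullet> y))))"
          unfolding K_def by (simp add: rho_even dl_odd algebra_simps)
        have eq2: "s * (K y + K (- y)) = mv_gauss_density A y * (s * (dl (b \<bullet> y) * (E (b \<bullet> y) - E (- (b \<bullet> y)))))"
          unfolding eqK by (simp add: algebra_simps)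
        have neg: "s * (dl (b \<bullet> y) * (E (b \<bullet> y) - E (- (b \<bullet> y)))) < 0"
          unfolding E_def by (rule sign_key[OF s t q])
        have "mv_gauss_density A y * (s * (dl (b \<bullet> y) * (E (b \<bullet> y) - E (- (b \<bullet> y))))) < 0"
          by (rule mult_pos_neg[OF rho_pos[OF pd] neg])
        thus "s * (K y + K (- y)) < 0" unfolding eq2 .
      qed
    qed
    thus ?thesis by simp
  qed
  finally show ?thesis .
qed



lemma r_fun_pos: assumes "\<sigma> > 0" shows "r_fun \<sigma> > 0"
proof (cases "\<sigma> \<le> 4 * sqrt 2 / sqrt pi")
  case True
  hence "1 \<le> 4 * sqrt 2 / (sqrt pi * \<sigma>)" using assms by (simp add: field_simps)
  hence "0 \<le> ln (4 * sqrt 2 / (sqrt pi * \<sigma>))" by simp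
  hence "0 \<le> \<sigma> * sqrt (2 * ln (4 * sqrt 2 / (sqrt pi * \<sigma>)))" using assms by simp
  moreover have "\<sigma>\<^sup>2 > 0" using assms by simp
  moreover have "r_fun \<sigma> = \<sigma>\<^sup>2 + \<sigma> * sqrt (2 * ln (4 * sqrt 2 / (sqrt pi * \<sigma>)))"
    unfolding r_fun_def using True assms by simp
  ultimately show ?thesis by linarith
next
  case False thus ?thesis unfolding r_fun_def using assms by simp
qed

lemma nd_abs_int: assumes sg: "\<sigma> > 0" shows "integrable lborel (\<lambda>x. \<bar>x\<bar> * normal_density \<mu> \<sigma> x)"
proof -
  have "integrable lborel (\<lambda>x. \<bar>normal_density \<mu> \<sigma> x * x\<bar>)"
    using integrable_normal_moment_nz_1[OF sg] by (rule integrable_abs)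
  thus ?thesis by (simp add: abs_mult mult.commute)
qed

lemma outer_deriv:
  fixes A :: "real^'n^'n" assumes pd: "pos_def_mat A" and t0: "t0 \<noteq> 0" and sg: "\<sigma> > 0"
  shows "((\<lambda>t. \<integral>x. hfun A b (t * x) * normal_density \<mu> \<sigma> x \<partial>lborel) has_real_derivative
          (\<integral>x. Hfun A b (t0 * x) * x * normal_density \<mu> \<sigma> x \<partial>lborel)) (at t0)"
proof (rule DERIV_integral[where g = "\<lambda>x. Cint A * (\<bar>x\<bar> * normal_density \<mu> \<sigma> x)"])
  show "integrable lborel (\<lambda>x. hfun A b (t * x) * normal_density \<mu> \<sigma> x)" for t
  proof (rule Bochner_Integration.integrable_bound[where f = "\<lambda>x. Cint A * normal_density \<mu> \<sigma> x"])
    show "integrable lborel (\<lambda>x. Cint A * normal_density \<mu> \<sigma> x)" using sg by simp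
    show "(\<lambda>x. hfun A b (t * x) * normal_density \<mu> \<sigma> x) \<in> borel_measurable lborel" by measurable
    show "AE x in lborel. norm (hfun A b (t * x) * normal_density \<mu> \<sigma> x) \<le> norm (Cint A * normal_density \<mu> \<sigma> x)"
    proof (rule AE_I2)
      fix x
      have "\<bar>hfun A b (t * x)\<bar> \<le> \<bar>Cint A\<bar>" using h_bound[OF pd, of b "t * x"] by simp
      thus "norm (hfun A b (t * x) * normal_density \<mu> \<sigma> x) \<le> norm (Cint A * normal_density \<mu> \<sigma> x)"
        by (simp add: abs_mult mult_right_mono)
    qed
  qed
  show "(\<lambda>x. Hfun A b (t0 * x) * x * normal_density \<mu> \<sigma> x) \<in> borel_measurable lborel" by measurable
  show "integrable lborel (\<lambda>x. Cint A * (\<bar>x\<bar> * normal_density \<mu> \<sigma> x))"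
    using nd_abs_int[OF sg] by simp
  fix t x
  have "\<bar>hfun A b (t * x) - hfun A b (t0 * x)\<bar> \<le> Cint A * \<bar>t * x - t0 * x\<bar>" by (rule h_lip[OF pd])
  also have "\<dots> = Cint A * \<bar>x\<bar> * \<bar>t - t0\<bar>" by (simp add: left_diff_distrib[symmetric] abs_mult)
  finally have l: "\<bar>hfun A b (t * x) - hfun A b (t0 * x)\<bar> \<le> Cint A * \<bar>x\<bar> * \<bar>t - t0\<bar>" .
  have "\<bar>hfun A b (t * x) * normal_density \<mu> \<sigma> x - hfun A b (t0 * x) * normal_density \<mu> \<sigma> x\<bar>
      = \<bar>hfun A b (t * x) - hfun A b (t0 * x)\<bar> * normal_density \<mu> \<sigma> x"
    by (simp add: left_diff_distrib[symmetric] abs_mult)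
  also have "\<dots> \<le> Cint A * \<bar>x\<bar> * \<bar>t - t0\<bar> * normal_density \<mu> \<sigma> x"
    using l by (simp add: mult_right_mono)
  finally show "\<bar>hfun A b (t * x) * normal_density \<mu> \<sigma> x - hfun A b (t0 * x) * normal_density \<mu> \<sigma> x\<bar>
      \<le> Cint A * (\<bar>x\<bar> * normal_density \<mu> \<sigma> x) * \<bar>t - t0\<bar>"
    by (simp add: algebra_simps)
next
  show "AE x in lborel. ((\<lambda>t. hfun A b (t * x) * normal_density \<mu> \<sigma> x) has_real_derivative
          Hfun A b (t0 * x) * x * normal_density \<mu> \<sigma> x) (at t0)"
    using AE_lborel_singleton[of 0]
  proof (rule AE_mp, intro AE_I2 impI)
    fix x :: real assume "x \<noteq> 0"
    hence "t0 * x \<noteq> 0" using t0 by simp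
    hence d: "(hfun A b has_real_derivative Hfun A b (t0 * x)) (at (t0 * x))"
      by (intro h_deriv[OF pd]) simp
    have "((\<lambda>t. t * x) has_real_derivative x) (at t0)" by (auto intro!: derivative_eq_intros)
    from DERIV_chain2[OF d this]
    have "((\<lambda>t. hfun A b (t * x)) has_real_derivative Hfun A b (t0 * x) * x) (at t0)" .
    thus "((\<lambda>t. hfun A b (t * x) * normal_density \<mu> \<sigma> x) has_real_derivative
          Hfun A b (t0 * x) * x * normal_density \<mu> \<sigma> x) (at t0)"
      by (rule DERIV_cmult_right)
  qed
qed

lemma outer_sign:
  fixes A :: "real^'n^'n" assumes pd: "pos_def_mat A" and t0: "t0 \<noteq> 0" and sg: "\<sigma> > 0"
  shows "(\<integral>x. Hfun A b (t0 * x) * x * normal_density \<mu> \<sigma> x \<partial>lborel) * t0 < 0"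
proof -
  have "(\<integral>x. Hfun A b (t0 * x) * x * normal_density \<mu> \<sigma> x \<partial>lborel) * t0
      = (\<integral>x. Hfun A b (t0 * x) * x * normal_density \<mu> \<sigma> x * t0 \<partial>lborel)"
    by simp
  also have "\<dots> = (\<integral>x. (t0 * x) * Hfun A b (t0 * x) * normal_density \<mu> \<sigma> x \<partial>lborel)"
    by (intro Bochner_Integration.integral_cong refl) (simp add: algebra_simps)
  also have "\<dots> < 0"
  proof (rule integral_neg_AE_lborel)
    show "integrable lborel (\<lambda>x. t0 * x * Hfun A b (t0 * x) * normal_density \<mu> \<sigma> x)"
    proof (rule Bochner_Integration.integrable_bound[where f = "\<lambda>x. \<bar>t0\<bar> * Cint A * (\<bar>x\<bar> * normal_density \<mu> \<sigma> x)"])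
      show "integrable lborel (\<lambda>x. \<bar>t0\<bar> * Cint A * (\<bar>x\<bar> * normal_density \<mu> \<sigma> x))"
        using nd_abs_int[OF sg] by simp
      show "(\<lambda>x. t0 * x * Hfun A b (t0 * x) * normal_density \<mu> \<sigma> x) \<in> borel_measurable lborel" by measurable
      show "AE x in lborel. norm (t0 * x * Hfun A b (t0 * x) * normal_density \<mu> \<sigma> x)
          \<le> norm (\<bar>t0\<bar> * Cint A * (\<bar>x\<bar> * normal_density \<mu> \<sigma> x))"
      proof (rule AE_I2)
        fix x
        have c: "Cint A > 0" unfolding Cint_def by (rule rho_int_pos[OF pd])
        have "\<bar>Hfun A b (t0 * x)\<bar> \<le> Cint A" by (rule H_bound[OF pd])
        hence "\<bar>t0 * x\<bar> * \<bar>Hfun A b (t0 * x)\<bar> * normal_density \<mu> \<sigma> x \<le> \<bar>t0 * x\<bar> * Cint A * normal_density \<mu> \<sigma> x"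
          by (intro mult_right_mono mult_left_mono) auto
        thus "norm (t0 * x * Hfun A b (t0 * x) * normal_density \<mu> \<sigma> x)
          \<le> norm (\<bar>t0\<bar> * Cint A * (\<bar>x\<bar> * normal_density \<mu> \<sigma> x))"
          using c by (simp add: abs_mult algebra_simps)
      qed
    qed
    show "AE x in lborel. t0 * x * Hfun A b (t0 * x) * normal_density \<mu> \<sigma> x < 0"
      using AE_lborel_singleton[of 0]
    proof (rule AE_mp, intro AE_I2 impI)
      fix x :: real assume "x \<noteq> 0"
      hence "t0 * x \<noteq> 0" using t0 by simp
      hence "t0 * x * Hfun A b (t0 * x) < 0" by (rule H_sign[OF pd])
      thus "t0 * x * Hfun A b (t0 * x) * normal_density \<mu> \<sigma> x < 0"
        using normal_density_pos[OF sg] by (simp add: mult_neg_pos)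
    qed
  qed
  finally show ?thesis .
qed

theorem lemma3:
  fixes \<gamma> s1 R :: real and S2 :: "real^'n^'n" and w :: "real \<times> (real^'n)"
  assumes "\<gamma> > 0" and "s1 > 0" and "pos_def_mat S2" and "R > 0"
    and "w \<in> S_set \<gamma> s1 S2 R"
  shows "\<exists>D. ((\<lambda>t. gauss_loss \<gamma> s1 S2 (t, snd w)) has_real_derivative D) (at (fst w))
             \<and> D * fst w < 0"
proof -
  define t0 where "t0 = fst w"
  define b where "b = snd w"
  have "sigma_tilde_max s1 S2 > 0" by (rule sigma_max_pos[OF assms(3) assms(2)])
  hence "r_fun (R * sigma_tilde_max s1 S2) > 0" using assms(4) by (intro r_fun_pos) simp
  hence "t0 * \<gamma> > 0" using assms(5) unfolding S_set_def t0_def by auto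
  hence t0p: "t0 > 0" using assms(1) by (simp add: zero_less_mult_iff)
  define I where "I y t = (\<integral>x. hfun S2 b (t * x) * normal_density (y * \<gamma>) s1 x \<partial>lborel)" for y t
  define J where "J y = (\<integral>x. Hfun S2 b (t0 * x) * x * normal_density (y * \<gamma>) s1 x \<partial>lborel)" for y
  have eqL: "gauss_loss \<gamma> s1 S2 (t, b) = 1/2 * I (-1) t + 1/2 * I 1 t" for t
    unfolding gauss_loss_def I_def hfun_def by simp
  have dI: "(I y has_real_derivative J y) (at t0)" for y
    unfolding I_def[abs_def] J_def using t0p assms(2) by (intro outer_deriv[OF assms(3)]) auto
  have "((\<lambda>t. gauss_loss \<gamma> s1 S2 (t, b)) has_real_derivative 1/2 * J (-1) + 1/2 * J 1) (at t0)"
    unfolding eqL by (intro DERIV_add DERIV_cmult dI)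
  moreover have "(1/2 * J (-1) + 1/2 * J 1) * t0 < 0"
  proof -
    have "J y * t0 < 0" for y unfolding J_def using t0p assms(2) by (intro outer_sign[OF assms(3)]) auto
    from this[of "-1"] this[of 1] show ?thesis by (simp add: algebra_simps)
  qed
  ultimately show ?thesis unfolding t0_def b_def by blast
qed

end
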